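(* Let $\mathcal{T}_n$ denote the set of trees on $n$ vertices. If $T$ is a maximal tree with respect to $e^{M_2}$ in $\mathcal{T}_n$ (i.e., $e^{M_2}(T)\geq e^{M_2}(T'')$ for all $T''\in\mathcal{T}_n$), then the distance between any pendant vertex and any vertex with the maximum degree in $T$ is at most 2.
   Context: For a tree $G$ with edge set $E(G)$ and vertex degrees $d_G(v)$, the exponential of the second Zagreb index is $e^{M_2}(G)=\sum_{uv\in E(G)} e^{d_G(u)d_G(v)}$. A pendant vertex is a vertex of degree 1. *)

theory Defs
  imports Complex_Main
begin

definition simple_graph :: "nat set \<Rightarrow> nat set set \<Rightarrow> bool" where
  "simple_graph V E \<longleftrightarrow> (\<forall>e\<in>E. \<exists>u v. e = {u, v} \<and> u \<noteq> v \<and> u \<in> V \<and> v \<in> V)"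

definition is_path :: "nat set set \<Rightarrow> nat list \<Rightarrow> bool" where
  "is_path E xs \<longleftrightarrow> xs \<noteq> [] \<and> distinct xs \<and>
     (\<forall>i. Suc i < length xs \<longrightarrow> {xs ! i, xs ! Suc i} \<in> E)"

definition graph_connected :: "nat set \<Rightarrow> nat set set \<Rightarrow> bool" where
  "graph_connected V E \<longleftrightarrow>
     (\<forall>u\<in>V. \<forall>v\<in>V. \<exists>xs. is_path E xs \<and> hd xs = u \<and> last xs = v)"

definition has_cycle :: "nat set set \<Rightarrow> bool" where
  "has_cycle E \<longleftrightarrow> (\<exists>xs. is_path E xs \<and> 3 \<le> length xs \<and> {last xs, hd xs} \<in> E)"

definition is_tree :: "nat set \<Rightarrow> nat set set \<Rightarrow> bool" where
  "is_tree V E \<longleftrightarrow> finite V \<and> V \<noteq> {} \<and> simple_graph V E \<and> graph_connected V E \<and> \<not> has_cycle E"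

text \<open>Trees on n vertices (labelled by 0..n-1; the index is isomorphism invariant).\<close>
definition trees :: "nat \<Rightarrow> nat set set set" where
  "trees n = {E. is_tree {..<n} E}"

definition deg :: "nat set set \<Rightarrow> nat \<Rightarrow> nat" where
  "deg E v = card {e\<in>E. v \<in> e}"

text \<open>Exponential second Zagreb index: for an edge {u,v}, the product over it is d(u) d(v).\<close>
definition eM2 :: "nat set set \<Rightarrow> real" where
  "eM2 E = (\<Sum>e\<in>E. exp (real (\<Prod>v\<in>e. deg E v)))"

definition graph_dist :: "nat set set \<Rightarrow> nat \<Rightarrow> nat \<Rightarrow> nat" where
  "graph_dist E u v = (LEAST k. \<exists>xs. is_path E xs \<and> hd xs = u \<and> last xs = v \<and> length xs = Suc k)"

end

theory Submission imports Defs begin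

lemma is_path_single[simp]: "is_path E [x]"
  by (simp add: is_path_def)

lemma is_path_Cons2[simp]: "is_path E (x#y#xs) \<longleftrightarrow> x \<notin> set (y#xs) \<and> {x,y} \<in> E \<and> is_path E (y#xs)"
proof
  assume h: "is_path E (x#y#xs)"
  have "Suc 0 < length (x#y#xs)" by simp
  then have "{(x#y#xs) ! 0, (x#y#xs) ! Suc 0} \<in> E" using h unfolding is_path_def by blast
  then have "{x,y} \<in> E" by simp
  moreover have "is_path E (y#xs)" unfolding is_path_def
  proof (intro conjI allI impI)
    show "distinct (y#xs)" using h by (simp add: is_path_def)
    fix i assume "Suc i < length (y#xs)"
    then have "Suc (Suc i) < length (x#y#xs)" by simp
    then have "{(x#y#xs) ! Suc i, (x#y#xs) ! Suc (Suc i)} \<in> E" using h unfolding is_path_def by blast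
    then show "{(y#xs) ! i, (y#xs) ! Suc i} \<in> E" by simp
  qed simp
  ultimately show "x \<notin> set (y#xs) \<and> {x,y} \<in> E \<and> is_path E (y#xs)" using h by (simp add: is_path_def)
next
  assume h: "x \<notin> set (y#xs) \<and> {x,y} \<in> E \<and> is_path E (y#xs)"
  show "is_path E (x#y#xs)" unfolding is_path_def
  proof (intro conjI allI impI)
    show "distinct (x#y#xs)" using h by (simp add: is_path_def)
    fix i assume i: "Suc i < length (x#y#xs)"
    show "{(x#y#xs) ! i, (x#y#xs) ! Suc i} \<in> E"
    proof (cases i)
      case 0 then show ?thesis using h by simp
    next
      case (Suc j)
      then have "Suc j < length (y#xs)" using i by simp
      then have "{(y#xs) ! j, (y#xs) ! Suc j} \<in> E" using h unfolding is_path_def by blast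
      then show ?thesis using Suc by simp
    qed
  qed simp
qed


lemma path_append:
  assumes "is_path E xs" "y \<notin> set xs" "{last xs, y} \<in> E"
  shows "is_path E (xs @ [y])"
  unfolding is_path_def
proof (intro conjI allI impI)
  show "distinct (xs @ [y])" using assms by (simp add: is_path_def)
  fix i assume i: "Suc i < length (xs @ [y])"
  show "{(xs @ [y]) ! i, (xs @ [y]) ! Suc i} \<in> E"
  proof (cases "Suc i < length xs")
    case True
    then have "{xs ! i, xs ! Suc i} \<in> E" using assms(1) unfolding is_path_def by blast
    then show ?thesis using True by (simp add: nth_append)
  next
    case False
    then have ii: "Suc i = length xs" using i by simp
    have "xs \<noteq> []" using assms(1) by (simp add: is_path_def)
    moreover have "i = length xs - 1" using ii by simp
    ultimately have "xs ! i = last xs" by (simp add: last_conv_nth)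
    then show ?thesis using ii assms(3) by (simp add: nth_append)
  qed
qed simp

lemma path_drop:
  assumes "is_path E xs" "j < length xs"
  shows "is_path E (drop j xs)"
  unfolding is_path_def
proof (intro conjI allI impI)
  show "drop j xs \<noteq> []" using assms(2) by simp
  show "distinct (drop j xs)" using assms(1) by (simp add: is_path_def)
  fix i assume i: "Suc i < length (drop j xs)"
  then have "Suc (j + i) < length xs" by simp
  then have "{xs ! (j+i), xs ! Suc (j+i)} \<in> E" using assms(1) unfolding is_path_def by blast
  then show "{drop j xs ! i, drop j xs ! Suc i} \<in> E" using i by simp
qed

lemma simple_edge:
  assumes "simple_graph V E" "{x,y} \<in> E"
  shows "x \<noteq> y" "x \<in> V" "y \<in> V"
proof -
  obtain p q where "{x,y} = {p,q}" "p \<noteq> q" "p \<in> V" "q \<in> V"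
    using assms unfolding simple_graph_def by blast
  then show "x \<noteq> y" "x \<in> V" "y \<in> V" by (auto simp: doubleton_eq_iff)
qed

lemma edge_other:
  assumes "simple_graph V E" "f \<in> E" "x \<in> f"
  shows "\<exists>y. f = {x,y} \<and> x \<noteq> y \<and> x \<in> V \<and> y \<in> V"
proof -
  obtain p q where pq: "f = {p,q}" "p \<noteq> q" "p \<in> V" "q \<in> V"
    using assms(1,2) unfolding simple_graph_def by blast
  show ?thesis
  proof (cases "x = p")
    case True then show ?thesis using pq by blast
  next
    case False then have "x = q" using pq assms(3) by blast
    then show ?thesis using pq by (intro exI[of _ p]) auto
  qed
qed

lemma leaf_exists:
  assumes fin: "finite V" and sg: "simple_graph V E" and nc: "\<not> has_cycle E" and e: "e \<in> E"
  shows "\<exists>x y. {e\<in>E. x \<in> e} = {{x,y}} \<and> x \<in> V \<and> y \<in> V \<and> x \<noteq> y"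
proof -
  obtain a where "a \<in> e" using sg e unfolding simple_graph_def by blast
  then obtain b where ab: "e = {a,b}" "a \<noteq> b" "a \<in> V" "b \<in> V" using edge_other[OF sg e] by blast
  define P where "P xs \<longleftrightarrow> is_path E xs \<and> set xs \<subseteq> V \<and> 2 \<le> length xs" for xs
  have P0: "P [a,b]" using ab e by (simp add: P_def)
  have bnd: "\<forall>xs. P xs \<longrightarrow> length xs < Suc (card V)"
  proof (intro allI impI)
    fix xs assume "P xs"
    then have "distinct xs" "set xs \<subseteq> V" by (auto simp: P_def is_path_def)
    then have "length xs \<le> card V" using fin by (metis card_mono distinct_card)
    then show "length xs < Suc (card V)" by simp
  qed
  obtain xs where xs: "P xs" and mx: "\<And>ys. P ys \<Longrightarrow> length ys \<le> length xs"
    using ex_has_greatest_nat[of P "[a,b]" length "Suc (card V)"] P0 bnd by blast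
  define L where "L = length xs"
  have L2: "2 \<le> L" using xs by (simp add: P_def L_def)
  have pxs: "is_path E xs" and sxs: "set xs \<subseteq> V" using xs by (auto simp: P_def)
  define x where "x = last xs"
  define p where "p = xs ! (L - 2)"
  have ne: "xs \<noteq> []" using L2 L_def by auto
  have xL: "x = xs ! (L - 1)" by (simp add: x_def L_def last_conv_nth[OF ne])
  have "Suc (L - 2) < length xs" using L2 by (simp add: L_def)
  then have "{xs ! (L-2), xs ! Suc (L-2)} \<in> E" using pxs unfolding is_path_def by blast
  moreover have "Suc (L-2) = L - 1" using L2 by simp
  ultimately have px: "{p, x} \<in> E" by (simp add: p_def xL)
  have dxs: "distinct xs" using pxs by (simp add: is_path_def)
  have "{e\<in>E. x \<in> e} = {{x,p}}"
  proof (intro equalityI subsetI)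
    fix f assume "f \<in> {e\<in>E. x \<in> e}"
    then have fE: "f \<in> E" and xf: "x \<in> f" by auto
    obtain y where fy: "f = {x,y}" using edge_other[OF sg fE xf] by blast
    have yV: "y \<in> V" and xy: "x \<noteq> y" using simple_edge[OF sg] fE fy by auto
    show "f \<in> {{x,p}}"
    proof (cases "y \<in> set xs")
      case False
      have "{last xs, y} \<in> E" using fE fy x_def by simp
      then have "P (xs @ [y])" using False pxs sxs yV L2 path_append[of E xs y]
        by (simp add: P_def L_def)
      then have "length (xs @ [y]) \<le> length xs" by (rule mx)
      then show ?thesis by simp
    next
      case True
      then obtain j where j: "j < L" "xs ! j = y" by (auto simp: in_set_conv_nth L_def)
      have "j \<noteq> L - 1" using j xL xy by auto
      show ?thesis
      proof (cases "j = L - 2")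
        case True then show ?thesis using fy j p_def by simp
      next
        case False
        then have jl: "j + 3 \<le> L" using \<open>j \<noteq> L - 1\<close> j by linarith
        have "is_path E (drop j xs)" using path_drop pxs j by (simp add: L_def)
        moreover have "3 \<le> length (drop j xs)" using jl by (simp add: L_def)
        moreover have "hd (drop j xs) = y" using j by (simp add: hd_drop_conv_nth L_def)
        moreover have "last (drop j xs) = x" using j by (simp add: x_def L_def)
        moreover have "{x, y} \<in> E" using fE fy by simp
        ultimately have "has_cycle E" unfolding has_cycle_def by metis
        then show ?thesis using nc by simp
      qed
    qed
  next
    fix f assume "f \<in> {{x,p}}"
    then show "f \<in> {e\<in>E. x \<in> e}" using px by (auto simp: insert_commute)
  qed
  moreover have "x \<in> V" "p \<in> V" using px simple_edge[OF sg] by auto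
  moreover have "x \<noteq> p" using px simple_edge[OF sg] by auto
  ultimately show ?thesis by blast
qed


lemma simple_finite: "finite V \<Longrightarrow> simple_graph V E \<Longrightarrow> finite E"
proof -
  assume f: "finite V" and sg: "simple_graph V E"
  have "E \<subseteq> Pow V"
  proof
    fix e assume "e \<in> E"
    then obtain p q where "e = {p,q}" "p \<in> V" "q \<in> V" using sg unfolding simple_graph_def by blast
    then show "e \<in> Pow V" by simp
  qed
  then show "finite E" using f by (meson finite_Pow_iff finite_subset)
qed

lemma is_path_mono: "is_path E' xs \<Longrightarrow> E' \<subseteq> E \<Longrightarrow> is_path E xs"
  unfolding is_path_def by blast

lemma has_cycle_mono: "has_cycle E' \<Longrightarrow> E' \<subseteq> E \<Longrightarrow> has_cycle E"
proof -
  assume "has_cycle E'" "E' \<subseteq> E"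
  then obtain xs where "is_path E' xs" "3 \<le> length xs" "{last xs, hd xs} \<in> E'" unfolding has_cycle_def by blast
  then show "has_cycle E" unfolding has_cycle_def using is_path_mono[OF _ \<open>E' \<subseteq> E\<close>] \<open>E' \<subseteq> E\<close> by blast
qed

lemma forest_card:
  "finite V \<Longrightarrow> simple_graph V E \<Longrightarrow> \<not> has_cycle E \<Longrightarrow> V \<noteq> {} \<Longrightarrow> card E + 1 \<le> card V"
proof (induction "card V" arbitrary: V E rule: less_induct)
  case less
  show ?case
  proof (cases "E = {}")
    case True then show ?thesis using less.prems by (simp add: Suc_leI card_gt_0_iff)
  next
    case False
    then obtain e where e: "e \<in> E" by blast
    obtain x y where xy: "{e\<in>E. x \<in> e} = {{x,y}}" "x \<in> V" "y \<in> V" "x \<noteq> y"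
      using leaf_exists[OF less.prems(1-3) e] by blast
    define V' where "V' = V - {x}"
    define E' where "E' = E - {{x,y}}"
    have xyE: "{x,y} \<in> E" using xy(1) by blast
    have finE: "finite E" using simple_finite less.prems by blast
    have cV: "card V' < card V" unfolding V'_def using card_Diff1_less[OF less.prems(1) xy(2)] .
    have sg': "simple_graph V' E'" unfolding simple_graph_def
    proof
      fix f assume f: "f \<in> E'"
      then have fE: "f \<in> E" and fne: "f \<noteq> {x,y}" by (auto simp: E'_def)
      have "x \<notin> f" using xy(1) fE fne by blast
      obtain p q where pq: "f = {p,q}" "p \<noteq> q" "p \<in> V" "q \<in> V"
        using less.prems(2) fE unfolding simple_graph_def by blast
      then show "\<exists>u v. f = {u, v} \<and> u \<noteq> v \<and> u \<in> V' \<and> v \<in> V'"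
        using \<open>x \<notin> f\<close> unfolding V'_def by blast
    qed
    have nc': "\<not> has_cycle E'" using less.prems(3) has_cycle_mono[of E' E] by (auto simp: E'_def)
    have ne': "V' \<noteq> {}" using xy unfolding V'_def by blast
    have "card E' + 1 \<le> card V'"
      using less.hyps[OF cV _ sg' nc' ne'] less.prems(1) by (simp add: V'_def)
    moreover have "card E' = card E - 1" using xyE finE by (simp add: E'_def)
    moreover have "card V' = card V - 1" using xy(2) by (simp add: V'_def)
    moreover have "card E > 0" using xyE finE card_gt_0_iff by blast
    ultimately show ?thesis by linarith
  qed
qed


lemma path_rev: "is_path E xs \<Longrightarrow> is_path E (rev xs)"
proof (induction xs)
  case Nil then show ?case by (simp add: is_path_def)
next
  case (Cons x xs)
  show ?case
  proof (cases xs)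
    case Nil then show ?thesis by simp
  next
    case (Cons y ys)
    have h: "x \<notin> set (y#ys)" "{x,y} \<in> E" "is_path E (y#ys)" using Cons.prems Cons by auto
    have "is_path E (rev (y#ys))" using Cons.IH h Cons by simp
    moreover have "last (rev (y#ys)) = y" by simp
    moreover have "{y,x} \<in> E" using h by (simp add: insert_commute)
    ultimately have "is_path E (rev (y#ys) @ [x])" using path_append[of E "rev (y#ys)" x] h(1) by simp
    then show ?thesis using Cons by simp
  qed
qed

lemma cycle_three:
  assumes "has_cycle E"
  shows "\<exists>x0 x1 x2. distinct [x0,x1,x2] \<and>
    (\<forall>w\<in>{x0,x1,x2}. \<exists>p q. p \<noteq> q \<and> {w,p} \<in> E \<and> {w,q} \<in> E)"
proof -
  obtain xs where xs: "is_path E xs" "3 \<le> length xs" "{last xs, hd xs} \<in> E"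
    using assms unfolding has_cycle_def by blast
  define L where "L = length xs"
  have d: "distinct xs" using xs by (simp add: is_path_def)
  have ed: "\<And>i. Suc i < L \<Longrightarrow> {xs ! i, xs ! Suc i} \<in> E" using xs unfolding is_path_def L_def by blast
  have ne: "xs \<noteq> []" using xs by auto
  have hd0: "hd xs = xs ! 0" using ne by (simp add: hd_conv_nth)
  have lastL: "last xs = xs ! (L - 1)" using ne by (simp add: last_conv_nth L_def)
  have neq: "\<And>i j. i < L \<Longrightarrow> j < L \<Longrightarrow> i \<noteq> j \<Longrightarrow> xs ! i \<noteq> xs ! j"
    using d by (simp add: nth_eq_iff_index_eq L_def)
  have L3: "3 \<le> L" using xs by (simp add: L_def)
  have e01: "{xs!0, xs!1} \<in> E" using ed[of 0] L3 by simp
  have e12: "{xs!1, xs!2} \<in> E" using ed[of 1] L3 by (simp add: numeral_2_eq_2)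
  have eL0: "{xs!0, xs!(L-1)} \<in> E" using xs(3) hd0 lastL by (simp add: insert_commute)
  have w0: "\<exists>p q. p \<noteq> q \<and> {xs!0,p} \<in> E \<and> {xs!0,q} \<in> E"
    using e01 eL0 neq[of 1 "L-1"] L3 by (intro exI[of _ "xs!1"] exI[of _ "xs!(L-1)"]) auto
  have w1: "\<exists>p q. p \<noteq> q \<and> {xs!1,p} \<in> E \<and> {xs!1,q} \<in> E"
    using e01 e12 neq[of 0 2] L3 by (intro exI[of _ "xs!0"] exI[of _ "xs!2"]) (auto simp: insert_commute)
  have w2: "\<exists>p q. p \<noteq> q \<and> {xs!2,p} \<in> E \<and> {xs!2,q} \<in> E"
  proof (cases "L = 3")
    case True
    then have "{xs!2, xs!0} \<in> E" using eL0 by (simp add: insert_commute)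
    then show ?thesis using e12 neq[of 1 0] L3 by (intro exI[of _ "xs!1"] exI[of _ "xs!0"]) (auto simp: insert_commute)
  next
    case False
    then have "{xs!2, xs!3} \<in> E" using ed[of 2] L3 by (simp add: numeral_3_eq_3 numeral_2_eq_2)
    then show ?thesis using e12 neq[of 1 3] L3 False by (intro exI[of _ "xs!1"] exI[of _ "xs!3"]) (auto simp: insert_commute)
  qed
  have "distinct [xs!0, xs!1, xs!2]" using neq[of 0 1] neq[of 0 2] neq[of 1 2] L3 by auto
  then show ?thesis using w0 w1 w2 by (intro exI[of _ "xs!0"] exI[of _ "xs!1"] exI[of _ "xs!2"]) auto
qed

definition dstar :: "nat \<Rightarrow> nat set set" where
  "dstar n = (\<lambda>i. {0,i}) ` {1..n div 2} \<union> (\<lambda>i. {1,i}) ` {n div 2 + 1..<n}"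

lemma dstar_tree:
  assumes n: "2 \<le> n"
  shows "dstar n \<in> trees n"
proof -
  define m where "m = n div 2"
  have m1: "1 \<le> m" and mn: "m < n" using n by (auto simp: m_def)
  have DS: "dstar n = (\<lambda>i. {0,i}) ` {1..m} \<union> (\<lambda>i. {1,i}) ` {m + 1..<n}" by (simp add: dstar_def m_def)
  have eA: "\<And>i. 1 \<le> i \<Longrightarrow> i \<le> m \<Longrightarrow> {0,i} \<in> dstar n"
  proof -
    fix i assume "1 \<le> i" "i \<le> m"
    then have "{0,i} \<in> (\<lambda>i. {0,i}) ` {1..m}" using imageI[of i "{1..m}" "\<lambda>i. {0::nat,i}"] by simp
    then show "{0,i} \<in> dstar n" unfolding DS by (rule UnI1)
  qed
  have eB: "\<And>i. m < i \<Longrightarrow> i < n \<Longrightarrow> {1,i} \<in> dstar n" unfolding DS by auto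
  have e01: "{0,1} \<in> dstar n" using eA m1 by simp
  have sg: "simple_graph {..<n} (dstar n)" unfolding simple_graph_def
  proof
    fix e assume "e \<in> dstar n"
    then consider (a) i where "e = {0,i}" "1 \<le> i" "i \<le> m" | (b) i where "e = {1,i}" "m < i" "i < n"
      unfolding DS by auto
    then show "\<exists>u v. e = {u, v} \<and> u \<noteq> v \<and> u \<in> {..<n} \<and> v \<in> {..<n}"
    proof cases
      case a then show ?thesis using mn by (intro exI[of _ 0] exI[of _ i]) auto
    next
      case b then show ?thesis using m1 n by (intro exI[of _ 1] exI[of _ i]) auto
    qed
  qed
  have nb: "\<And>w p. w \<noteq> 0 \<Longrightarrow> w \<noteq> 1 \<Longrightarrow> {w,p} \<in> dstar n \<Longrightarrow> p = (if w \<le> m then 0 else 1)"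
  proof -
    fix w p assume w: "w \<noteq> 0" "w \<noteq> 1" "{w,p} \<in> dstar n"
    then consider (a) i where "{w,p} = {0,i}" "1 \<le> i" "i \<le> m" | (b) i where "{w,p} = {1,i}" "m < i" "i < n"
      unfolding DS by auto
    then show "p = (if w \<le> m then 0 else 1)"
    proof cases
      case a then show ?thesis using w by (auto simp: doubleton_eq_iff)
    next
      case b then show ?thesis using w by (auto simp: doubleton_eq_iff)
    qed
  qed
  have nc: "\<not> has_cycle (dstar n)"
  proof
    assume "has_cycle (dstar n)"
    then obtain x0 x1 x2 where x: "distinct [x0,x1,x2]"
      "\<forall>w\<in>{x0,x1,x2}. \<exists>p q. p \<noteq> q \<and> {w,p} \<in> dstar n \<and> {w,q} \<in> dstar n"
      using cycle_three by blast
    obtain w where w: "w \<in> {x0,x1,x2}" "w \<noteq> 0" "w \<noteq> 1" using x(1) by auto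
    then obtain p q where "p \<noteq> q" "{w,p} \<in> dstar n" "{w,q} \<in> dstar n" using x(2) by blast
    then show False using nb[OF w(2,3)] by metis
  qed
  have conn: "\<And>u v. u < n \<Longrightarrow> v < n \<Longrightarrow> u \<le> v \<Longrightarrow> \<exists>xs. is_path (dstar n) xs \<and> hd xs = u \<and> last xs = v"
  proof -
    fix u v assume uv: "u < n" "v < n" "u \<le> v"
    show "\<exists>xs. is_path (dstar n) xs \<and> hd xs = u \<and> last xs = v"
    proof (cases "u = v")
      case True then show ?thesis by (intro exI[of _ "[u]"]) simp
    next
      case F1: False
      show ?thesis
      proof (cases "u = 0")
        case u0: True
        show ?thesis
        proof (cases "v = 1")
          case True then show ?thesis using u0 e01 by (intro exI[of _ "[0,1]"]) simp
        next
          case v1: False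
          show ?thesis
          proof (cases "v \<le> m")
            case True then show ?thesis using u0 F1 eA[of v] by (intro exI[of _ "[0,v]"]) simp
          next
            case False then show ?thesis using u0 v1 e01 eB[of v] uv m1
              by (intro exI[of _ "[0,1,v]"]) simp
          qed
        qed
      next
        case u0: False
        show ?thesis
        proof (cases "u = 1")
          case u1: True
          show ?thesis
          proof (cases "v \<le> m")
            case True then show ?thesis using u1 F1 u0 e01 eA[of v] uv
              by (intro exI[of _ "[1,0,v]"]) (simp add: insert_commute)
          next
            case False then show ?thesis using u1 F1 eB[of v] uv by (intro exI[of _ "[1,v]"]) simp
          qed
        next
          case u1: False
          show ?thesis
          proof (cases "u \<le> m")
            case um: True
            show ?thesis
            proof (cases "v \<le> m")
              case True then show ?thesis using um u1 u0 F1 eA[of v] eA[of u] uv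
                by (intro exI[of _ "[u,0,v]"]) (simp add: insert_commute)
            next
              case False then show ?thesis using um u1 u0 F1 eA[of u] e01 eB[of v] uv
                by (intro exI[of _ "[u,0,1,v]"]) (simp add: insert_commute)
            qed
          next
            case um: False
            then show ?thesis using u1 u0 F1 eB[of v] eB[of u] uv
                by (intro exI[of _ "[u,1,v]"]) (simp add: insert_commute)
          qed
        qed
      qed
    qed
  qed
  have "graph_connected {..<n} (dstar n)" unfolding graph_connected_def
  proof (intro ballI)
    fix u v assume "u \<in> {..<n}" "v \<in> {..<n}"
    then have uv: "u < n" "v < n" by auto
    show "\<exists>xs. is_path (dstar n) xs \<and> hd xs = u \<and> last xs = v"
    proof (cases "u \<le> v")
      case True then show ?thesis using conn uv by blast
    next
      case False
      then obtain xs where "is_path (dstar n) xs" "hd xs = v" "last xs = u" using conn[of v u] uv by auto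
      then show ?thesis using path_rev[of "dstar n" xs]
        by (intro exI[of _ "rev xs"]) (auto simp: hd_rev last_rev)
    qed
  qed
  moreover have "(0::nat) \<in> {..<n}" using n by simp
  then have "{..<n} \<noteq> ({}::nat set)" by blast
  ultimately show ?thesis using sg nc unfolding trees_def is_tree_def by simp
qed


lemma exp_gt_2x:
  fixes t :: real assumes "0 \<le> t" shows "2 * t < exp t"
proof -
  have "1 + t/3 \<le> exp (t/3)" by simp
  then have "(1 + t/3)^3 \<le> exp (t/3)^3" using assms by (intro power_mono) auto
  also have "exp (t/3)^3 = exp t" using exp_of_nat_mult[of 3 "t/3"] by simp
  finally have h: "(1 + t/3)^3 \<le> exp t" .
  have "0 \<le> (t - 3/2)^2" by simp
  then have "0 < (t - 3/2)^2 + 3/4" by linarith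
  then have "2 * t < 1 + t + t^2/3" by (simp add: power2_eq_square algebra_simps)
  moreover have "(1 + t/3)^3 = 1 + t + t^2/3 + t^3/27" by (simp add: power3_eq_cube power2_eq_square field_simps)
  moreover have "0 \<le> t^3" using assms by simp
  ultimately have "2 * t < (1 + t/3)^3" by linarith
  then show ?thesis using h by simp
qed

lemma dstar_eM2:
  assumes n: "2 \<le> n"
  shows "exp (real ((n div 2) * (n - n div 2))) \<le> eM2 (dstar n)"
proof -
  define m where "m = n div 2"
  have m1: "1 \<le> m" and mn: "m < n" using n by (auto simp: m_def)
  define A where "A = (\<lambda>i. {0::nat,i}) ` {1..m}"
  define B where "B = (\<lambda>i. {1::nat,i}) ` {m + 1..<n}"
  have DS: "dstar n = A \<union> B" by (simp add: dstar_def m_def A_def B_def)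
  have e01: "{0,1} \<in> A" unfolding A_def using imageI[of 1 "{1..m}" "\<lambda>i. {0::nat,i}"] m1 by simp
  have B0: "0 \<notin> e" if "e \<in> B" for e
  proof -
    obtain i where "e = {1,i}" "m+1 \<le> i" using \<open>e \<in> B\<close> unfolding B_def by auto
    then show ?thesis using m1 by simp
  qed
  have A0: "0 \<in> e" if "e \<in> A" for e
  proof -
    obtain i where "e = {0,i}" using \<open>e \<in> A\<close> unfolding A_def by auto
    then show ?thesis by simp
  qed
  have A1: "e = {0,1}" if "e \<in> A" "1 \<in> e" for e
  proof -
    obtain i where "e = {0,i}" using \<open>e \<in> A\<close> unfolding A_def by auto
    then show ?thesis using that(2) by auto
  qed
  have B1: "1 \<in> e" if "e \<in> B" for e
  proof -
    obtain i where "e = {1,i}" using \<open>e \<in> B\<close> unfolding B_def by auto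
    then show ?thesis by simp
  qed
  have d0: "{e \<in> dstar n. 0 \<in> e} = A"
    using A0 B0 unfolding DS by blast
  have "inj_on (\<lambda>i. {0::nat,i}) {1..m}" by (auto simp: inj_on_def doubleton_eq_iff)
  then have deg0: "deg (dstar n) 0 = m" unfolding deg_def d0 A_def by (simp add: card_image)
  have d1: "{e \<in> dstar n. 1 \<in> e} = insert {0,1} B"
    using A1 B1 e01 unfolding DS by blast
  have "inj_on (\<lambda>i. {1::nat,i}) {m+1..<n}" by (auto simp: inj_on_def doubleton_eq_iff)
  moreover have "{0,1} \<notin> B" using B0 by blast
  ultimately have deg1: "deg (dstar n) 1 = n - m" unfolding deg_def d1 B_def using mn by (simp add: card_image)
  have fin: "finite (dstar n)" unfolding DS A_def B_def by simp
  have e01': "{0,1} \<in> dstar n" unfolding DS using e01 by (rule UnI1)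
  have "exp (real (\<Prod>v\<in>{0,1}. deg (dstar n) v)) \<le> eM2 (dstar n)"
    unfolding eM2_def by (rule member_le_sum[OF e01' _ fin]) simp
  then show ?thesis using deg0 deg1 by (simp add: m_def)
qed


lemma deg_nbr:
  assumes sg: "simple_graph V E"
  shows "deg E x = card {w. {x,w} \<in> E}"
proof -
  have "bij_betw (\<lambda>w. {x,w}) {w. {x,w} \<in> E} {e\<in>E. x \<in> e}"
    unfolding bij_betw_def
  proof
    show "inj_on (\<lambda>w. {x,w}) {w. {x,w} \<in> E}" by (auto simp: inj_on_def doubleton_eq_iff)
    show "(\<lambda>w. {x,w}) ` {w. {x,w} \<in> E} = {e\<in>E. x \<in> e}"
    proof (intro equalityI subsetI)
      fix e assume "e \<in> {e\<in>E. x \<in> e}"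
      then obtain y where "e = {x,y}" "e \<in> E" using edge_other[OF sg] by blast
      then show "e \<in> (\<lambda>w. {x,w}) ` {w. {x,w} \<in> E}" by blast
    qed auto
  qed
  then show ?thesis unfolding deg_def by (simp add: bij_betw_same_card)
qed

lemma cyc3:
  assumes "{a,b} \<in> E" "{b,c} \<in> E" "{c,a} \<in> E" "distinct [a,b,c]"
  shows "has_cycle E"
  unfolding has_cycle_def using assms by (intro exI[of _ "[a,b,c]"]) simp

lemma cyc4:
  assumes "{a,b} \<in> E" "{b,c} \<in> E" "{c,d} \<in> E" "{d,a} \<in> E" "distinct [a,b,c,d]"
  shows "has_cycle E"
  unfolding has_cycle_def using assms by (intro exI[of _ "[a,b,c,d]"]) simp


lemma sq_bound: fixes n m r :: nat assumes "n = 2*m + r" "real r * real r \<le> 1"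
  shows "(real n - 1)^2 / 4 + (real n - 1)/2 \<le> real m * (real m + real r)"
proof -
  have "real n = 2 * real m + real r" using assms(1) by simp
  then have "(real n - 1)^2 / 4 + (real n - 1)/2 = real m * (real m + real r) + (real r * real r - 1)/4"
    by (simp add: power2_eq_square algebra_simps add_divide_distrib diff_divide_distrib)
  moreover have "(real r * real r - 1)/4 \<le> 0" using assms(2) by simp
  ultimately show ?thesis by linarith
qed

lemma dist_le:
  assumes "is_path E xs" "hd xs = u" "last xs = v" "length xs = Suc k"
  shows "graph_dist E u v \<le> k"
  unfolding graph_dist_def by (rule Least_le) (use assms in blast)

theorem lemma1:
  fixes n :: nat and T :: "nat set set" and u v :: nat
  assumes "T \<in> trees n"
    and "\<forall>T'' \<in> trees n. eM2 T'' \<le> eM2 T"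
    and "u \<in> {..<n}" and "deg T u = 1"
    and "v \<in> {..<n}" and "deg T v = Max (deg T ` {..<n})"
  shows "graph_dist T u v \<le> 2"
proof -
  have tr: "is_tree {..<n} T" using assms(1) by (simp add: trees_def)
  then have sg: "simple_graph {..<n} T" and nc: "\<not> has_cycle T" by (simp_all add: is_tree_def)
  have finT: "finite T" using simple_finite[OF _ sg] by simp
  have "{e\<in>T. u\<in>e} \<noteq> {}" using assms(4) unfolding deg_def by (metis card.empty zero_neq_one)
  then obtain e0 where e0: "e0 \<in> T" "u \<in> e0" by blast
  then obtain y where "e0 = {u,y}" "u \<noteq> y" "y \<in> {..<n}" using edge_other[OF sg] by blast
  then have n2: "2 \<le> n" using assms(3) by auto
  have "(0::nat) \<in> {..<n}" using n2 by simp
  then have "{..<n} \<noteq> ({}::nat set)" by blast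
  then have cardT: "card T + 1 \<le> n" using forest_card[of "{..<n}" T] sg nc by simp
  define N where "N x = {w. {x,w} \<in> T}" for x
  have degN: "\<And>x. deg T x = card (N x)" using deg_nbr[OF sg] N_def by simp
  have Nsub: "N x \<subseteq> {..<n}" for x
  proof
    fix w assume "w \<in> N x" then have "{x,w} \<in> T" by (simp add: N_def)
    then show "w \<in> {..<n}" using simple_edge[OF sg] by blast
  qed
  have finN: "finite (N x)" for x using Nsub finite_subset by blast
  have inN: "{x,w} \<in> T \<Longrightarrow> w \<in> N x" for x w by (simp add: N_def)
  have inN': "{x,w} \<in> T \<Longrightarrow> x \<in> N w" for x w by (simp add: N_def insert_commute)
  have NE: "w \<in> N x \<Longrightarrow> {x,w} \<in> T" for x w by (simp add: N_def)
  have NE': "w \<in> N x \<Longrightarrow> {w,x} \<in> T" for x w by (simp add: N_def insert_commute)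
  have Nneq: "w \<in> N x \<Longrightarrow> x \<noteq> w" for x w using simple_edge[OF sg] NE by blast
  have "\<exists>a b. {a,b} \<in> T \<and> n \<le> deg T a + deg T b"
  proof (rule ccontr)
    assume H: "\<not> (\<exists>a b. {a,b} \<in> T \<and> n \<le> deg T a + deg T b)"
    define K where "K = (real n - 1)^2 / 4"
    have wt: "exp (real (\<Prod>v\<in>e. deg T v)) \<le> exp K" if e: "e \<in> T" for e
    proof -
      obtain a where "a \<in> e" using e sg unfolding simple_graph_def by blast
      then obtain b where ab: "e = {a,b}" "a \<noteq> b" using edge_other[OF sg e] by blast
      have "\<not> n \<le> deg T a + deg T b" using H e ab by blast
      then have s: "deg T a + deg T b \<le> n - 1" by linarith
      have prod: "(\<Prod>v\<in>e. deg T v) = deg T a * deg T b" using ab by simp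
      define x where "x = real (deg T a)"
      define y where "y = real (deg T b)"
      have "real (deg T a + deg T b) \<le> real (n - 1)" using s by linarith
      then have xy: "x + y \<le> real n - 1" using n2 by (simp add: x_def y_def)
      have "0 \<le> (x - y)^2" by simp
      then have "4 * (x * y) \<le> (x + y)^2" by (simp add: power2_eq_square algebra_simps)
      also have "(x + y)^2 \<le> (real n - 1)^2" using xy by (intro power_mono) (auto simp: x_def y_def)
      finally have "x * y \<le> K" by (simp add: K_def)
      then show ?thesis using prod by (simp add: x_def y_def)
    qed
    have "eM2 T \<le> real (card T) * exp K" unfolding eM2_def by (rule sum_bounded_above) (rule wt)
    also have "\<dots> \<le> (real n - 1) * exp K" using cardT by (intro mult_right_mono) auto
    finally have up: "eM2 T \<le> (real n - 1) * exp K" .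
    have lo: "exp (real ((n div 2) * (n - n div 2))) \<le> eM2 T"
      using dstar_eM2[OF n2] assms(2) dstar_tree[OF n2] by (meson order_trans)
    define m where "m = n div 2"
    obtain r where r: "n = 2*m + r" "r \<le> 1" unfolding m_def by (metis div_mult_mod_eq mod_less_eq_dividend mod2_eq_if le_refl zero_le_one mult.commute add.commute)
    have nm: "n - m = m + r" using r by simp
    have "K + (real n - 1)/2 \<le> real m * (real m + real r)"
    proof -
      have "real r * real r \<le> 1" using r(2) by (cases r) auto
      then show ?thesis using r(1) sq_bound[of n m r] unfolding K_def by simp
    qed
    also have "\<dots> = real ((n div 2) * (n - n div 2))" using nm by (simp add: m_def[symmetric])
    finally have c1: "exp (K + (real n - 1)/2) \<le> exp (real ((n div 2) * (n - n div 2)))" by simp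
    have "exp K * exp ((real n - 1)/2) \<le> exp K * (real n - 1)"
      using c1 lo up exp_add[of K "(real n - 1)/2"] by (simp only: mult.commute[of "real n - 1"])
    then have "exp ((real n - 1)/2) \<le> real n - 1" using mult_le_cancel_left_pos[of "exp K"] by simp
    moreover have "2 * ((real n - 1)/2) < exp ((real n - 1)/2)" using n2 by (intro exp_gt_2x) simp
    ultimately show False by simp
  qed
  then obtain a b where ab: "{a,b} \<in> T" "n \<le> deg T a + deg T b" by blast
  have disj: "N x \<inter> N z = {}" if "{x,z} \<in> T" for x z
  proof (rule ccontr)
    assume "N x \<inter> N z \<noteq> {}"
    then obtain w where w: "w \<in> N x" "w \<in> N z" by blast
    have "has_cycle T"
      using that NE[OF w(2)] NE'[OF w(1)] Nneq[OF w(1)] Nneq[OF w(2)] Nneq[OF inN[OF that]]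
      by (intro cyc3[of x z T w]) auto
    then show False using nc by simp
  qed
  have NU: "N a \<union> N b = {..<n}"
  proof (rule card_seteq)
    show "finite {..<n}" by simp
    show "N a \<union> N b \<subseteq> {..<n}" using Nsub by blast
    have "card (N a \<union> N b) = card (N a) + card (N b)" using disj[OF ab(1)] finN by (simp add: card_Un_disjoint)
    then show "card {..<n} \<le> card (N a \<union> N b)" using ab(2) degN by simp
  qed
  have Mx: "deg T x \<le> deg T v" if "x < n" for x
    using that assms(6) by simp
  have key: False if xz: "{x,z} \<in> T" "N x \<union> N z = {..<n}" "v \<in> N x" "v \<noteq> x" "v \<noteq> z" "x < n" for x z
  proof -
    have "N v \<subseteq> {x}"
    proof
      fix y assume y: "y \<in> N v"
      then have "y \<in> N x \<union> N z" using Nsub xz(2) by blast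
      then show "y \<in> {x}"
      proof
        assume yx: "y \<in> N x"
        have "has_cycle T"
          using NE[OF xz(3)] NE[OF y] NE'[OF yx] Nneq[OF xz(3)] Nneq[OF y] Nneq[OF yx]
          by (intro cyc3[of x v T y]) auto
        then show ?thesis using nc by simp
      next
        assume yz: "y \<in> N z"
        show ?thesis
        proof (rule ccontr)
          assume "y \<notin> {x}"
          have "has_cycle T"
            using NE[OF y] NE'[OF yz] inN'[OF xz(1)] NE[OF xz(3)] Nneq[OF y] Nneq[OF yz] Nneq[OF xz(3)]
              xz(4,5) \<open>y \<notin> {x}\<close> Nneq[OF inN[OF xz(1)]] NE[OF inN'[OF xz(1)]]
            by (intro cyc4[of v y T z x]) auto
          then show False using nc by simp
        qed
      qed
    qed
    then have "deg T v \<le> 1" using degN card_mono[of "{x}" "N v"] by simp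
    then have dx: "card (N x) \<le> 1" using Mx[OF xz(6)] degN by simp
    have "{v,z} \<subseteq> N x" using xz(3) inN[OF xz(1)] by blast
    then have "card {v,z} \<le> card (N x)" using finN by (rule card_mono[rotated])
    then show False using dx xz(5) by simp
  qed
  have an: "a < n" "b < n" using simple_edge[OF sg ab(1)] by auto
  have ba: "{b,a} \<in> T" using ab(1) by (simp add: insert_commute)
  have vab: "v = a \<or> v = b"
  proof (rule ccontr)
    assume nv: "\<not> (v = a \<or> v = b)"
    have "v \<in> N a \<union> N b" using assms(5) NU by blast
    then show False
    proof
      assume "v \<in> N a" then show False using key[OF ab(1) NU] nv an by blast
    next
      assume "v \<in> N b" then show False using key[OF ba _ ] NU nv an by (metis Un_commute)
    qed
  qed
  have fin: "graph_dist T u x \<le> 2" if xz: "{x,z} \<in> T" "N x \<union> N z = {..<n}" for x z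
  proof -
    have uu: "u \<in> N x \<union> N z" using assms(3) xz(2) by blast
    consider "u = x" | "u \<noteq> x" "u \<in> N x" | "u \<noteq> x" "u \<in> N z" "u \<notin> N x" using uu by blast
    then show ?thesis
    proof cases
      case 1 then show ?thesis using dist_le[of T "[u]" u x 0] by simp
    next
      case 2 then show ?thesis using dist_le[of T "[u,x]" u x 1] NE'[of u x] by simp
    next
      case 3
      have "x \<noteq> z" "u \<noteq> z" using Nneq[OF inN[OF xz(1)]] Nneq[OF \<open>u \<in> N z\<close>] by auto
      then show ?thesis using 3 dist_le[of T "[u,z,x]" u x 2] NE'[OF \<open>u \<in> N z\<close>] xz(1)
        by (simp add: insert_commute)
    qed
  qed
  show ?thesis using vab fin[OF ab(1) NU] fin[OF ba] NU by (metis Un_commute)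
qed

end
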